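(* In the setting described in the context, let $Q(k)=W(k)-H\bar H W(k)$ and $\gamma=\lambda_{\max}\big(\mathbb{E}[Q(k)^TQ(k)]\big)$. Then $\gamma<1$.
   Context: Let $V=\{1,\ldots,N\}$, $N\ge 2$, and let $G_I=(V,E_I)$ be a connected undirected graph which is not complete, with adjacency matrix $A$; let $B=A+I_N$. For $i\in V$ let $N_I(i)$ be the set of neighbors of $i$ in $G_I$, $\tilde N_I(i)=N_I(i)\cup\{i\}$, $m_i=\deg_{G_I}(i)+1$, $m=\sum_{i=1}^N m_i$. For $i,j\in V$ set $s_{ij}=\sum_{l=1}^{j}B(i,l)+\sum_{r=1}^{i-1}m_r$ (the last sum is $0$ for $i=1$). Let $e_1,\ldots,e_m$ be the standard basis of $\mathbb{R}^m$ and define $E_j^i=e_{s_{ij}}$ if $j\in\tilde N_I(i)$ and $E_j^i=\mathbf{0}_m$ otherwise. Let $H=\big[\sum_{i=1}^N E_1^i,\ldots,\sum_{i=1}^N E_N^i\big]\in\mathbb{R}^{m\times N}$ and $\bar H=\mathrm{diag}(1/m_1,\ldots,1/m_N)H^T$. Let $G_C=(V,E_C)$ be a communication graph with $G_m\subseteq G_C\subseteq G_I$, where $G_m$ is a maximal triangle-free spanning subgraph of $G_I$ (a triangle-free spanning subgraph such that adding any edge of $G_I$ not in it creates a triangle); $N_C(i)$ denotes the neighbors of $i$ in $G_C$. For $i,j\in V$ let $\mathrm{ind}(i,j)=\tilde N_I(i)\cap\tilde N_I(j)$ and $W_{ij}=I_m-\tfrac12\sum_{l\in \mathrm{ind}(i,j)}(E_l^{i}-E_l^{j})(E_l^{i}-E_l^{j})^T$.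 The random matrix $W(k)$ is $W_{i_kj_k}$, where $i_k$ is drawn uniformly at random from $V$ and then $j_k$ is drawn uniformly at random from $N_C(i_k)$; the expectation is with respect to this random choice. *)

theory Defs
  imports "Jordan_Normal_Form.Char_Poly"
begin

text \<open>Matrix/vector indices are 0-based
  in the library, so the paper's basis vector e_k is unit_vec m (k-1).\<close>

definition undirected_graph :: "nat \<Rightarrow> (nat \<Rightarrow> nat \<Rightarrow> bool) \<Rightarrow> bool" where
  "undirected_graph N E \<longleftrightarrow>
     (\<forall>i j. E i j \<longrightarrow> i \<in> {1..N} \<and> j \<in> {1..N}) \<and>
     (\<forall>i j. E i j \<longrightarrow> E j i) \<and> (\<forall>i. \<not> E i i)"

definition connected_graph :: "nat \<Rightarrow> (nat \<Rightarrow> nat \<Rightarrow> bool) \<Rightarrow> bool" where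
  "connected_graph N E \<longleftrightarrow> (\<forall>i\<in>{1..N}. \<forall>j\<in>{1..N}. E\<^sup>*\<^sup>* i j)"

definition complete_graph :: "nat \<Rightarrow> (nat \<Rightarrow> nat \<Rightarrow> bool) \<Rightarrow> bool" where
  "complete_graph N E \<longleftrightarrow> (\<forall>i\<in>{1..N}. \<forall>j\<in>{1..N}. i \<noteq> j \<longrightarrow> E i j)"

definition spanning_subgraph :: "nat \<Rightarrow> (nat \<Rightarrow> nat \<Rightarrow> bool) \<Rightarrow> (nat \<Rightarrow> nat \<Rightarrow> bool) \<Rightarrow> bool" where
  "spanning_subgraph N F E \<longleftrightarrow> undirected_graph N F \<and> (\<forall>i j. F i j \<longrightarrow> E i j)"

definition triangle_free :: "(nat \<Rightarrow> nat \<Rightarrow> bool) \<Rightarrow> bool" where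
  "triangle_free F \<longleftrightarrow> \<not> (\<exists>a b c. F a b \<and> F b c \<and> F a c)"

text \<open>Maximal triangle-free spanning subgraph: adding any edge of E not in F creates a triangle.\<close>
definition maximal_triangle_free_spanning_subgraph ::
    "nat \<Rightarrow> (nat \<Rightarrow> nat \<Rightarrow> bool) \<Rightarrow> (nat \<Rightarrow> nat \<Rightarrow> bool) \<Rightarrow> bool" where
  "maximal_triangle_free_spanning_subgraph N F E \<longleftrightarrow>
     spanning_subgraph N F E \<and> triangle_free F \<and>
     (\<forall>a b. E a b \<and> \<not> F a b \<longrightarrow> (\<exists>c. F a c \<and> F c b))"

definition nbr :: "nat \<Rightarrow> (nat \<Rightarrow> nat \<Rightarrow> bool) \<Rightarrow> nat \<Rightarrow> nat set" where
  "nbr N E i = {j \<in> {1..N}. E i j}"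

definition cnbr :: "nat \<Rightarrow> (nat \<Rightarrow> nat \<Rightarrow> bool) \<Rightarrow> nat \<Rightarrow> nat set" where
  "cnbr N E i = insert i (nbr N E i)"

definition Bmat :: "nat \<Rightarrow> (nat \<Rightarrow> nat \<Rightarrow> bool) \<Rightarrow> nat \<Rightarrow> nat \<Rightarrow> nat" where
  "Bmat N E i l = (if E i l then 1 else 0) + (if i = l then 1 else 0)"

definition mdeg :: "nat \<Rightarrow> (nat \<Rightarrow> nat \<Rightarrow> bool) \<Rightarrow> nat \<Rightarrow> nat" where
  "mdeg N E i = card (nbr N E i) + 1"

definition mtot :: "nat \<Rightarrow> (nat \<Rightarrow> nat \<Rightarrow> bool) \<Rightarrow> nat" where
  "mtot N E = (\<Sum>i=1..N. mdeg N E i)"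

definition sidx :: "nat \<Rightarrow> (nat \<Rightarrow> nat \<Rightarrow> bool) \<Rightarrow> nat \<Rightarrow> nat \<Rightarrow> nat" where
  "sidx N E i j = (\<Sum>l=1..j. Bmat N E i l) + (\<Sum>r=1..i-1. mdeg N E r)"

definition Evec :: "nat \<Rightarrow> (nat \<Rightarrow> nat \<Rightarrow> bool) \<Rightarrow> nat \<Rightarrow> nat \<Rightarrow> real vec" where
  "Evec N E i j = (if j \<in> cnbr N E i then unit_vec (mtot N E) (sidx N E i j - 1)
                   else 0\<^sub>v (mtot N E))"

definition Hmat :: "nat \<Rightarrow> (nat \<Rightarrow> nat \<Rightarrow> bool) \<Rightarrow> real mat" where
  "Hmat N E = mat (mtot N E) N (\<lambda>(r, c). \<Sum>i=1..N. Evec N E i (c + 1) $ r)"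

definition Hbar :: "nat \<Rightarrow> (nat \<Rightarrow> nat \<Rightarrow> bool) \<Rightarrow> real mat" where
  "Hbar N E = mat N (mtot N E) (\<lambda>(r, c). (1 / real (mdeg N E (r + 1))) * Hmat N E $$ (c, r))"

definition ind :: "nat \<Rightarrow> (nat \<Rightarrow> nat \<Rightarrow> bool) \<Rightarrow> nat \<Rightarrow> nat \<Rightarrow> nat set" where
  "ind N E i j = cnbr N E i \<inter> cnbr N E j"

text \<open>W_ij = I_m - 1/2 sum_{l in ind(i,j)} (E_l^i - E_l^j)(E_l^i - E_l^j)^T, written entrywise\<close>
definition Wmat :: "nat \<Rightarrow> (nat \<Rightarrow> nat \<Rightarrow> bool) \<Rightarrow> nat \<Rightarrow> nat \<Rightarrow> real mat" where
  "Wmat N E i j = mat (mtot N E) (mtot N E) (\<lambda>(r, c).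
      (if r = c then 1 else 0) - 1/2 * (\<Sum>l\<in>ind N E i j.
          (Evec N E i l $ r - Evec N E j l $ r) * (Evec N E i l $ c - Evec N E j l $ c)))"

definition Qmat :: "nat \<Rightarrow> (nat \<Rightarrow> nat \<Rightarrow> bool) \<Rightarrow> nat \<Rightarrow> nat \<Rightarrow> real mat" where
  "Qmat N E i j = Wmat N E i j - Hmat N E * Hbar N E * Wmat N E i j"

text \<open>E[Q^T Q]: i uniform on V, then j uniform on N_C(i) (neighbours in the communication graph EC).\<close>
definition EQTQ :: "nat \<Rightarrow> (nat \<Rightarrow> nat \<Rightarrow> bool) \<Rightarrow> (nat \<Rightarrow> nat \<Rightarrow> bool) \<Rightarrow> real mat" where
  "EQTQ N EI EC = mat (mtot N EI) (mtot N EI) (\<lambda>(r, c).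
      \<Sum>i=1..N. \<Sum>j\<in>nbr N EC i.
         (1 / (real N * real (card (nbr N EC i)))) *
         (transpose_mat (Qmat N EI i j) * Qmat N EI i j) $$ (r, c))"

definition lambda_max :: "real mat \<Rightarrow> real" where
  "lambda_max M = Max {k. eigenvalue M k}"

end

theory Submission imports Defs begin

definition pp :: "nat \<Rightarrow> (nat \<Rightarrow> nat \<Rightarrow> bool) \<Rightarrow> nat \<Rightarrow> nat \<Rightarrow> nat" where
  "pp N E i l = sidx N E i l - 1"
definition off :: "nat \<Rightarrow> (nat \<Rightarrow> nat \<Rightarrow> bool) \<Rightarrow> nat \<Rightarrow> nat" where
  "off N E i = (\<Sum>r=1..i-1. mdeg N E r)"
definition pre :: "nat \<Rightarrow> (nat \<Rightarrow> nat \<Rightarrow> bool) \<Rightarrow> nat \<Rightarrow> nat \<Rightarrow> nat" where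
  "pre N E i j = card (cnbr N E i \<inter> {1..j})"
definition TT :: "nat \<Rightarrow> (nat \<Rightarrow> nat \<Rightarrow> bool) \<Rightarrow> (nat \<times> nat) set" where
  "TT N E = Sigma {1..N} (cnbr N E)"

locale ugraph =
  fixes N :: nat and E :: "nat \<Rightarrow> nat \<Rightarrow> bool"
  assumes ug: "undirected_graph N E"
begin

lemma E_range: "E i j \<Longrightarrow> i \<in> {1..N} \<and> j \<in> {1..N}"
  using ug unfolding undirected_graph_def by blast
lemma E_sym: "E i j \<Longrightarrow> E j i"
  using ug unfolding undirected_graph_def by blast
lemma E_irr: "\<not> E i i"
  using ug unfolding undirected_graph_def by blast

lemma nbr_sub: "nbr N E i \<subseteq> {1..N}" unfolding nbr_def by auto
lemma fin_nbr[simp]: "finite (nbr N E i)" using nbr_sub finite_subset by blast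
lemma fin_cnbr[simp]: "finite (cnbr N E i)" unfolding cnbr_def by simp
lemma cnbr_sub: "i \<in> {1..N} \<Longrightarrow> cnbr N E i \<subseteq> {1..N}"
  using nbr_sub unfolding cnbr_def by auto
lemma card_cnbr: "card (cnbr N E i) = mdeg N E i"
proof -
  have "i \<notin> nbr N E i" using E_irr unfolding nbr_def by auto
  thus ?thesis unfolding cnbr_def mdeg_def by simp
qed
lemma mdeg_pos: "mdeg N E i > 0" unfolding mdeg_def by simp
lemma in_cnbr: "i \<in> {1..N} \<Longrightarrow> l \<in> cnbr N E i \<longleftrightarrow> l = i \<or> E i l"
  unfolding cnbr_def nbr_def using E_range by auto
lemma cnbr_sym: "i \<in> {1..N} \<Longrightarrow> l \<in> cnbr N E i \<Longrightarrow> i \<in> cnbr N E l"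
  using in_cnbr E_range E_sym cnbr_sub by (metis in_mono)

lemma Bmat_eq: "i \<in> {1..N} \<Longrightarrow> Bmat N E i l = (if l \<in> cnbr N E i then 1 else 0)"
  unfolding Bmat_def using in_cnbr[of i l] E_irr by auto

lemma sum_B: assumes "i \<in> {1..N}" shows "(\<Sum>l=1..j. Bmat N E i l) = pre N E i j"
proof -
  have "pre N E i j = card ({1..j} \<inter> cnbr N E i)" unfolding pre_def by (simp add: Int_commute)
  also have "\<dots> = (\<Sum>l\<in>{1..j} \<inter> cnbr N E i. 1)" by simp
  also have "\<dots> = (\<Sum>l=1..j. if l \<in> cnbr N E i then 1 else 0)"
    by (subst sum.inter_restrict) auto
  finally show ?thesis using Bmat_eq[OF assms] by simp
qed

lemma pp_eq: "i \<in> {1..N} \<Longrightarrow> pp N E i l = off N E i + pre N E i l - 1"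
  unfolding pp_def sidx_def off_def using sum_B by simp

lemma pre_bounds: assumes "i \<in> {1..N}" "l \<in> cnbr N E i"
  shows "1 \<le> pre N E i l" "pre N E i l \<le> mdeg N E i"
proof -
  have "l \<in> {1..N}" using cnbr_sub[OF assms(1)] assms(2) by blast
  hence "l \<in> cnbr N E i \<inter> {1..l}" using assms by auto
  thus "1 \<le> pre N E i l" unfolding pre_def
    by (metis One_nat_def Suc_leI card_gt_0_iff empty_iff finite_Int finite_atLeastAtMost)
  show "pre N E i l \<le> mdeg N E i" unfolding pre_def card_cnbr[symmetric]
    by (rule card_mono) auto
qed

lemma pre_mono: assumes "l \<in> cnbr N E i" "l' \<in> cnbr N E i" "l < l'" "1 \<le> l"
  shows "pre N E i l < pre N E i l'"
  unfolding pre_def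
proof (rule psubset_card_mono)
  show "finite (cnbr N E i \<inter> {1..l'})" by simp
  have "l' \<notin> cnbr N E i \<inter> {1..l}" "l' \<in> cnbr N E i \<inter> {1..l'}" using assms by auto
  moreover have "cnbr N E i \<inter> {1..l} \<subseteq> cnbr N E i \<inter> {1..l'}" using assms by auto
  ultimately show "cnbr N E i \<inter> {1..l} \<subset> cnbr N E i \<inter> {1..l'}" by blast
qed

lemma off_Suc: "i \<ge> 1 \<Longrightarrow> off N E (Suc i) = off N E i + mdeg N E i"
  unfolding off_def by (cases i) auto

lemma off_mono: "1 \<le> i \<Longrightarrow> i < i' \<Longrightarrow> off N E i + mdeg N E i \<le> off N E i'"
proof (induction i' rule: nat_induct)
  case 0 then show ?case by simp
next
  case (Suc n)
  show ?case
  proof (cases "i = n")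
    case True then show ?thesis using off_Suc Suc by simp
  next
    case False
    hence "off N E i + mdeg N E i \<le> off N E n" using Suc by simp
    also have "\<dots> \<le> off N E (Suc n)" using off_Suc[of n] Suc False by simp
    finally show ?thesis .
  qed
qed

lemma mtot_off: "mtot N E = off N E (Suc N)"
  unfolding mtot_def off_def by simp

lemma pp_range: assumes "i \<in> {1..N}" "l \<in> cnbr N E i"
  shows "off N E i \<le> pp N E i l" "pp N E i l < off N E i + mdeg N E i"
  using pp_eq[OF assms(1)] pre_bounds[OF assms] by auto

lemma pp_lt: assumes "i \<in> {1..N}" "l \<in> cnbr N E i" shows "pp N E i l < mtot N E"
proof -
  have "off N E i + mdeg N E i \<le> off N E (Suc N)"
    using assms(1) off_mono[of i "Suc N"] by auto
  thus ?thesis using pp_range[OF assms] mtot_off by simp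
qed

lemma pp_inj: assumes "i \<in> {1..N}" "l \<in> cnbr N E i" "i' \<in> {1..N}" "l' \<in> cnbr N E i'"
   "pp N E i l = pp N E i' l'"
  shows "i = i' \<and> l = l'"
proof -
  have ii: "i = i'"
  proof (rule ccontr)
    assume "i \<noteq> i'"
    hence "i < i' \<or> i' < i" by auto
    thus False
    proof
      assume "i < i'"
      thus False using off_mono[of i i'] pp_range[OF assms(1,2)] pp_range[OF assms(3,4)] assms by auto
    next
      assume "i' < i"
      thus False using off_mono[of i' i] pp_range[OF assms(1,2)] pp_range[OF assms(3,4)] assms by auto
    qed
  qed
  have "l \<in> {1..N}" "l' \<in> {1..N}" using cnbr_sub assms ii by blast+
  hence l1: "1 \<le> l" "1 \<le> l'" by auto
  have a: "pp N E i l = off N E i + pre N E i l - 1" "pp N E i l' = off N E i + pre N E i l' - 1"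
    using pp_eq assms ii by auto
  have b: "1 \<le> pre N E i l" "1 \<le> pre N E i l'" using pre_bounds(1) assms ii by auto
  have "pre N E i l = pre N E i l'" using a b assms(5) unfolding ii by linarith
  hence "l = l'" using pre_mono[of l i l'] pre_mono[of l' i l] assms ii l1
    by (metis less_irrefl nat_neq_iff)
  with ii show ?thesis by simp
qed

lemma inj_TT: "inj_on (\<lambda>(i,l). pp N E i l) (TT N E)"
  unfolding TT_def inj_on_def using pp_inj by auto

lemma card_TT: "card (TT N E) = mtot N E"
  unfolding TT_def mtot_def by (simp add: card_cnbr)

lemma img_TT: "(\<lambda>(i,l). pp N E i l) ` TT N E = {..<mtot N E}"
proof (rule card_subset_eq)
  show "finite {..<mtot N E}" by simp
  show "(\<lambda>(i,l). pp N E i l) ` TT N E \<subseteq> {..<mtot N E}"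
    unfolding TT_def using pp_lt by auto
  show "card ((\<lambda>(i,l). pp N E i l) ` TT N E) = card {..<mtot N E}"
    using card_image[OF inj_TT] card_TT by simp
qed

lemma bij_TT: "bij_betw (\<lambda>(i,l). pp N E i l) (TT N E) {..<mtot N E}"
  using inj_TT img_TT unfolding bij_betw_def by simp

lemma sum_reindex: "(\<Sum>r<mtot N E. f r) = (\<Sum>i=1..N. \<Sum>l\<in>cnbr N E i. f (pp N E i l))"
proof -
  have "(\<Sum>r<mtot N E. f r) = (\<Sum>x\<in>TT N E. f ((\<lambda>(i,l). pp N E i l) x))"
    using sum.reindex_bij_betw[OF bij_TT, of f] by simp
  also have "\<dots> = (\<Sum>(i,l)\<in>TT N E. f (pp N E i l))"
    by (rule sum.cong) auto
  also have "\<dots> = (\<Sum>i=1..N. \<Sum>l\<in>cnbr N E i. f (pp N E i l))"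
    unfolding TT_def by (rule sum.Sigma[symmetric]) auto
  finally show ?thesis .
qed


lemma Evec_in: "i \<in> {1..N} \<Longrightarrow> l \<in> cnbr N E i \<Longrightarrow> r < mtot N E \<Longrightarrow>
   Evec N E i l $ r = (if r = pp N E i l then 1 else 0)"
  unfolding Evec_def pp_def by (auto simp: unit_vec_def)
lemma Evec_out: "l \<notin> cnbr N E i \<Longrightarrow> r < mtot N E \<Longrightarrow> Evec N E i l $ r = 0"
  unfolding Evec_def by auto

end

lemma mv_index: assumes "A \<in> carrier_mat n k" "v \<in> carrier_vec k" "r < n"
  shows "(A *\<^sub>v v) $ r = (\<Sum>c<k. A $$ (r,c) * v $ c)"
  using assms by (auto simp: scalar_prod_def row_def lessThan_atLeast0 intro!: sum.cong)

lemma sp_def': "v \<in> carrier_vec n \<Longrightarrow> w \<in> carrier_vec n \<Longrightarrow> v \<bullet> w = (\<Sum>r<n. v $ r * w $ r)"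
  by (auto simp: scalar_prod_def lessThan_atLeast0)

lemma delta2: "(\<Sum>r<(m::nat). if r = A \<and> r = B then (1::real) else 0) = (if A = B \<and> A < m then 1 else 0)"
proof (cases "A = B")
  case True then show ?thesis by simp
next
  case False
  then have "(\<Sum>r<(m::nat). if r = A \<and> r = B then (1::real) else 0) = (\<Sum>r<m. 0)"
    by (intro sum.cong) auto
  then show ?thesis using False by simp
qed

definition Uv :: "nat \<Rightarrow> (nat \<Rightarrow> nat \<Rightarrow> bool) \<Rightarrow> nat \<Rightarrow> nat \<Rightarrow> nat \<Rightarrow> nat \<Rightarrow> real" where
  "Uv N E i j l r = Evec N E i l $ r - Evec N E j l $ r"
definition aco :: "nat \<Rightarrow> (nat \<Rightarrow> nat \<Rightarrow> bool) \<Rightarrow> nat \<Rightarrow> nat \<Rightarrow> nat \<Rightarrow> real vec \<Rightarrow> real" where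
  "aco N E i j l v = (\<Sum>c<mtot N E. Uv N E i j l c * v $ c)"
definition avg :: "nat \<Rightarrow> (nat \<Rightarrow> nat \<Rightarrow> bool) \<Rightarrow> real vec \<Rightarrow> nat \<Rightarrow> real" where
  "avg N E w l = (\<Sum>i\<in>cnbr N E l. w $ pp N E i l) / real (mdeg N E l)"

lemma W_carrier: "Wmat N E i j \<in> carrier_mat (mtot N E) (mtot N E)"
  unfolding Wmat_def by simp

lemma W_entry: "r < mtot N E \<Longrightarrow> c < mtot N E \<Longrightarrow> Wmat N E i j $$ (r,c) =
   (if r = c then 1 else 0) - 1/2 * (\<Sum>l\<in>ind N E i j. Uv N E i j l r * Uv N E i j l c)"
  unfolding Wmat_def Uv_def by simp

lemma W_apply: assumes "v \<in> carrier_vec (mtot N E)" "r < mtot N E"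
  shows "(Wmat N E i j *\<^sub>v v) $ r = v $ r - 1/2 * (\<Sum>l\<in>ind N E i j. Uv N E i j l r * aco N E i j l v)"
proof -
  let ?m = "mtot N E" let ?U = "Uv N E i j"
  have "(Wmat N E i j *\<^sub>v v) $ r = (\<Sum>c<?m. ((if r = c then 1 else 0) - 1/2 * (\<Sum>l\<in>ind N E i j. ?U l r * ?U l c)) * v $ c)"
    by (subst mv_index[OF W_carrier assms]) (rule sum.cong, auto simp: W_entry assms(2))
  also have "\<dots> = (\<Sum>c<?m. (if r = c then v $ c else 0) - 1/2 * (\<Sum>l\<in>ind N E i j. ?U l r * ?U l c * v $ c))"
    by (rule sum.cong) (auto simp: left_diff_distrib sum_distrib_right)
  also have "\<dots> = (\<Sum>c<?m. (if r = c then v $ c else 0)) - 1/2 * (\<Sum>c<?m. \<Sum>l\<in>ind N E i j. ?U l r * ?U l c * v $ c)"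
    by (simp add: sum_subtractf sum_distrib_left)
  also have "(\<Sum>c<?m. (if r = c then v $ c else 0)) = v $ r" using assms(2) by simp
  also have "(\<Sum>c<?m. \<Sum>l\<in>ind N E i j. ?U l r * ?U l c * v $ c)
      = (\<Sum>l\<in>ind N E i j. \<Sum>c<?m. ?U l r * (?U l c * v $ c))"
    by (subst sum.swap) (simp add: mult.assoc)
  also have "\<dots> = (\<Sum>l\<in>ind N E i j. ?U l r * aco N E i j l v)"
    by (simp add: aco_def sum_distrib_left)
  finally show ?thesis .
qed

context ugraph begin

lemma aco_eq: assumes "i \<in> {1..N}" "j \<in> {1..N}" "l \<in> ind N E i j"
  shows "aco N E i j l v = v $ pp N E i l - v $ pp N E j l"
proof -
  have l: "l \<in> cnbr N E i" "l \<in> cnbr N E j" using assms(3) unfolding ind_def by auto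
  have lt: "pp N E i l < mtot N E" "pp N E j l < mtot N E" using pp_lt assms l by auto
  have "aco N E i j l v = (\<Sum>c<mtot N E. (if c = pp N E i l then v $ c else 0) - (if c = pp N E j l then v $ c else 0))"
    unfolding aco_def Uv_def by (rule sum.cong) (auto simp: Evec_in[OF assms(1) l(1)] Evec_in[OF assms(2) l(2)])
  also have "\<dots> = v $ pp N E i l - v $ pp N E j l"
    by (simp add: sum_subtractf lt)
  finally show ?thesis .
qed

lemma U_orth: assumes "i \<in> {1..N}" "j \<in> {1..N}" "i \<noteq> j" "l \<in> ind N E i j" "l' \<in> ind N E i j"
  shows "(\<Sum>r<mtot N E. Uv N E i j l r * Uv N E i j l' r) = (if l = l' then 2 else 0)"
proof -
  have l: "l \<in> cnbr N E i" "l \<in> cnbr N E j" "l' \<in> cnbr N E i" "l' \<in> cnbr N E j"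
    using assms(4,5) unfolding ind_def by auto
  have lt: "pp N E i l < mtot N E" "pp N E j l < mtot N E" "pp N E i l' < mtot N E" "pp N E j l' < mtot N E"
    using pp_lt assms l by auto
  have d1: "pp N E i l = pp N E i l' \<longleftrightarrow> l = l'" using pp_inj assms l by metis
  have d2: "pp N E j l = pp N E j l' \<longleftrightarrow> l = l'" using pp_inj assms l by metis
  have d3: "pp N E i l \<noteq> pp N E j l'" using pp_inj assms l by metis
  have d4: "pp N E j l \<noteq> pp N E i l'" using pp_inj assms l by metis
  have "(\<Sum>r<mtot N E. Uv N E i j l r * Uv N E i j l' r) =
     (\<Sum>r<mtot N E. (if r = pp N E i l \<and> r = pp N E i l' then 1 else 0) - (if r = pp N E i l \<and> r = pp N E j l' then 1 else 0)
        - (if r = pp N E j l \<and> r = pp N E i l' then 1 else 0) + (if r = pp N E j l \<and> r = pp N E j l' then 1 else 0))"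
    unfolding Uv_def by (rule sum.cong) (auto simp: Evec_in[OF assms(1) l(1)] Evec_in[OF assms(2) l(2)] Evec_in[OF assms(1) l(3)] Evec_in[OF assms(2) l(4)])
  also have "\<dots> = (if l = l' then 2 else 0)"
    unfolding sum.distrib sum_subtractf delta2 using d1 d2 d3 d4 lt by simp
  finally show ?thesis .
qed

lemma W_norm: assumes "i \<in> {1..N}" "j \<in> {1..N}" "i \<noteq> j" "v \<in> carrier_vec (mtot N E)"
  shows "(\<Sum>r<mtot N E. ((Wmat N E i j *\<^sub>v v) $ r)^2) = (\<Sum>r<mtot N E. (v $ r)^2) - 1/2 * (\<Sum>l\<in>ind N E i j. (aco N E i j l v)^2)"
proof -
  let ?m = "mtot N E" let ?I = "ind N E i j"
  let ?U = "Uv N E i j"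
  define a where "a l = aco N E i j l v" for l
  define S where "S r = (\<Sum>l\<in>?I. ?U l r * a l)" for r
  have fI: "finite ?I" unfolding ind_def by simp
  have "(\<Sum>r<?m. ((Wmat N E i j *\<^sub>v v) $ r)^2) = (\<Sum>r<?m. (v $ r - 1/2 * S r)^2)"
    using W_apply[OF assms(4)] unfolding S_def a_def by simp
  also have "\<dots> = (\<Sum>r<?m. (v $ r)^2 - v $ r * S r + 1/4 * (S r * S r))"
    by (rule sum.cong) (auto simp: power2_eq_square algebra_simps)
  also have "\<dots> = (\<Sum>r<?m. (v $ r)^2) - (\<Sum>r<?m. v $ r * S r) + 1/4 * (\<Sum>r<?m. S r * S r)"
    by (simp add: sum.distrib sum_subtractf sum_distrib_left)
  also have "(\<Sum>r<?m. v $ r * S r) = (\<Sum>r<?m. \<Sum>l\<in>?I. a l * (?U l r * v $ r))"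
    unfolding S_def by (simp add: sum_distrib_left mult_ac)
  also have "\<dots> = (\<Sum>l\<in>?I. \<Sum>r<?m. a l * (?U l r * v $ r))"
    by (rule sum.swap)
  also have "\<dots> = (\<Sum>l\<in>?I. a l * a l)"
    by (simp add: sum_distrib_left[symmetric] a_def aco_def)
  also have "(\<Sum>r<?m. S r * S r) = (\<Sum>r<?m. \<Sum>l\<in>?I. \<Sum>l'\<in>?I. (a l * a l') * (?U l r * ?U l' r))"
    unfolding S_def by (rule sum.cong) (auto simp: sum_product mult_ac)
  also have "\<dots> = (\<Sum>l\<in>?I. \<Sum>r<?m. \<Sum>l'\<in>?I. (a l * a l') * (?U l r * ?U l' r))"
    by (rule sum.swap)
  also have "\<dots> = (\<Sum>l\<in>?I. \<Sum>l'\<in>?I. \<Sum>r<?m. (a l * a l') * (?U l r * ?U l' r))"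
    by (rule sum.cong, simp, rule sum.swap)
  also have "\<dots> = (\<Sum>l\<in>?I. \<Sum>l'\<in>?I. (a l * a l') * (if l = l' then 2 else 0))"
    by (rule sum.cong, simp, rule sum.cong, simp) (simp add: sum_distrib_left[symmetric] U_orth[OF assms(1-3)])
  also have "\<dots> = (\<Sum>l\<in>?I. \<Sum>l'\<in>?I. (if l' = l then 2 * (a l * a l) else 0))"
    by (rule sum.cong, simp, rule sum.cong, auto)
  also have "\<dots> = (\<Sum>l\<in>?I. 2 * (a l * a l))"
    using fI by (simp add: sum.delta)
  finally show ?thesis unfolding a_def by (simp add: power2_eq_square sum_distrib_left)
qed


lemma H_carrier: "Hmat N E \<in> carrier_mat (mtot N E) N" unfolding Hmat_def by simp
lemma Hbar_carrier: "Hbar N E \<in> carrier_mat N (mtot N E)" unfolding Hbar_def by simp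

lemma H_entry: assumes "i0 \<in> {1..N}" "l0 \<in> cnbr N E i0" "c < N"
  shows "Hmat N E $$ (pp N E i0 l0, c) = (if c = l0 - 1 then 1 else 0)"
proof -
  have r: "pp N E i0 l0 < mtot N E" using pp_lt assms by auto
  have l0: "l0 \<in> {1..N}" using cnbr_sub assms by blast
  have "Hmat N E $$ (pp N E i0 l0, c) = (\<Sum>i=1..N. Evec N E i (c+1) $ pp N E i0 l0)"
    unfolding Hmat_def using r assms(3) by simp
  also have "\<dots> = (\<Sum>i=1..N. if i = i0 then (if c + 1 = l0 then 1 else 0) else 0)"
  proof (rule sum.cong)
    fix i assume i: "i \<in> {1..N}"
    show "Evec N E i (c+1) $ pp N E i0 l0 = (if i = i0 then (if c + 1 = l0 then 1 else 0) else 0)"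
    proof (cases "c + 1 \<in> cnbr N E i")
      case True
      then show ?thesis using Evec_in[OF i True r] pp_inj[OF i True assms(1,2)] by auto
    next
      case False
      then show ?thesis using Evec_out[OF False r] assms by auto
    qed
  qed simp
  also have "\<dots> = (if c = l0 - 1 then 1 else 0)" using assms(1) l0 by auto
  finally show ?thesis .
qed

lemma H_apply: assumes "i0 \<in> {1..N}" "l0 \<in> cnbr N E i0" "z \<in> carrier_vec N"
  shows "(Hmat N E *\<^sub>v z) $ pp N E i0 l0 = z $ (l0 - 1)"
proof -
  have r: "pp N E i0 l0 < mtot N E" using pp_lt assms by auto
  have l0: "l0 \<in> {1..N}" using cnbr_sub assms by blast
  have "(Hmat N E *\<^sub>v z) $ pp N E i0 l0 = (\<Sum>c<N. (if c = l0 - 1 then z $ c else 0))"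
    by (subst mv_index[OF H_carrier assms(3) r]) (rule sum.cong, auto simp: H_entry[OF assms(1,2)])
  also have "\<dots> = z $ (l0 - 1)"
  proof -
    have "l0 - 1 < N" using l0 by auto
    then show ?thesis by simp
  qed
  finally show ?thesis .
qed

lemma conv_sum: assumes "l \<in> {1..N}"
  shows "(\<Sum>i=1..N. if l \<in> cnbr N E i then g i else 0) = (\<Sum>i\<in>cnbr N E l. g i)"
proof -
  have "(\<Sum>i\<in>cnbr N E l. g i) = (\<Sum>i\<in>{1..N} \<inter> cnbr N E l. g i)"
    using cnbr_sub[OF assms] by (metis inf.absorb2)
  also have "\<dots> = (\<Sum>i=1..N. if i \<in> cnbr N E l then g i else 0)"
    by (rule sum.inter_restrict) simp
  also have "\<dots> = (\<Sum>i=1..N. if l \<in> cnbr N E i then g i else 0)"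
    by (rule sum.cong) (use cnbr_sym assms in auto)
  finally show ?thesis by simp
qed

lemma swap_sum: "(\<Sum>i=1..N. \<Sum>l\<in>cnbr N E i. g i l) = (\<Sum>l=1..N. \<Sum>i\<in>cnbr N E l. g i l)"
proof -
  have "(\<Sum>i=1..N. \<Sum>l\<in>cnbr N E i. g i l) = (\<Sum>i=1..N. \<Sum>l=1..N. if l \<in> cnbr N E i then g i l else 0)"
  proof (rule sum.cong)
    fix i assume i: "i \<in> {1..N}"
    have "(\<Sum>l\<in>cnbr N E i. g i l) = (\<Sum>l\<in>{1..N} \<inter> cnbr N E i. g i l)"
      using cnbr_sub[OF i] by (metis inf.absorb2)
    also have "\<dots> = (\<Sum>l=1..N. if l \<in> cnbr N E i then g i l else 0)"
      by (rule sum.inter_restrict) simp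
    finally show "(\<Sum>l\<in>cnbr N E i. g i l) = (\<Sum>l=1..N. if l \<in> cnbr N E i then g i l else 0)" .
  qed simp
  also have "\<dots> = (\<Sum>l=1..N. \<Sum>i=1..N. if l \<in> cnbr N E i then g i l else 0)"
    by (rule sum.swap)
  also have "\<dots> = (\<Sum>l=1..N. \<Sum>i\<in>cnbr N E l. g i l)"
  proof (rule sum.cong)
    fix l assume "l \<in> {1..N}"
    then show "(\<Sum>i=1..N. if l \<in> cnbr N E i then g i l else 0) = (\<Sum>i\<in>cnbr N E l. g i l)"
      by (rule conv_sum)
  qed simp
  finally show ?thesis .
qed

lemma Hbar_apply: assumes "w \<in> carrier_vec (mtot N E)" "c < N"
  shows "(Hbar N E *\<^sub>v w) $ c = avg N E w (c + 1)"
proof -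
  let ?m = "mtot N E"
  have c1: "c + 1 \<in> {1..N}" using assms by auto
  have "(Hbar N E *\<^sub>v w) $ c = (\<Sum>r<?m. (1 / real (mdeg N E (c+1))) * (Hmat N E $$ (r, c) * w $ r))"
    by (subst mv_index[OF Hbar_carrier assms(1,2)]) (rule sum.cong, auto simp: Hbar_def assms(2))
  also have "\<dots> = (1 / real (mdeg N E (c+1))) * (\<Sum>r<?m. Hmat N E $$ (r, c) * w $ r)"
    by (simp add: sum_distrib_left)
  also have "(\<Sum>r<?m. Hmat N E $$ (r, c) * w $ r) = (\<Sum>i=1..N. \<Sum>l\<in>cnbr N E i. Hmat N E $$ (pp N E i l, c) * w $ pp N E i l)"
    by (rule sum_reindex)
  also have "\<dots> = (\<Sum>i=1..N. \<Sum>l\<in>cnbr N E i. if l = c + 1 then w $ pp N E i l else 0)"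
  proof (rule sum.cong, simp, rule sum.cong, simp)
    fix i l assume i: "i \<in> {1..N}" and l: "l \<in> cnbr N E i"
    have "l \<in> {1..N}" using cnbr_sub[OF i] l by blast
    then show "Hmat N E $$ (pp N E i l, c) * w $ pp N E i l = (if l = c + 1 then w $ pp N E i l else 0)"
      using H_entry[OF i l assms(2)] by auto
  qed
  also have "\<dots> = (\<Sum>i=1..N. if c + 1 \<in> cnbr N E i then w $ pp N E i (c+1) else 0)"
    by (rule sum.cong) (auto simp: sum.delta')
  also have "\<dots> = (\<Sum>i\<in>cnbr N E (c+1). w $ pp N E i (c+1))"
    by (rule conv_sum[OF c1])
  finally show ?thesis unfolding avg_def by simp
qed

end

lemma group_var: fixes f :: "nat \<Rightarrow> real" assumes "finite C" "card C = n" "n > 0"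
  shows "(\<Sum>i\<in>C. (f i - (\<Sum>i\<in>C. f i) / real n)^2) = (\<Sum>i\<in>C. (f i)^2) - real n * ((\<Sum>i\<in>C. f i) / real n)^2"
proof -
  define A where "A = (\<Sum>i\<in>C. f i) / real n"
  have sA: "(\<Sum>i\<in>C. f i) = real n * A" unfolding A_def using assms by simp
  have "(\<Sum>i\<in>C. (f i - A)^2) = (\<Sum>i\<in>C. (f i)^2 - 2 * A * f i + A^2)"
    by (rule sum.cong) (auto simp: power2_eq_square algebra_simps)
  also have "\<dots> = (\<Sum>i\<in>C. (f i)^2) - 2 * A * (\<Sum>i\<in>C. f i) + real n * A^2"
    using assms by (simp add: sum.distrib sum_subtractf sum_distrib_left)
  also have "\<dots> = (\<Sum>i\<in>C. (f i)^2) - real n * A^2" unfolding sA by (simp add: power2_eq_square)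
  finally show ?thesis unfolding A_def .
qed

context ugraph begin

lemma P_norm: assumes "w \<in> carrier_vec (mtot N E)"
  shows "(\<Sum>r<mtot N E. ((w - Hmat N E *\<^sub>v (Hbar N E *\<^sub>v w)) $ r)^2) =
     (\<Sum>r<mtot N E. (w $ r)^2) - (\<Sum>l=1..N. real (mdeg N E l) * (avg N E w l)^2)"
proof -
  let ?m = "mtot N E"
  have z: "Hbar N E *\<^sub>v w \<in> carrier_vec N" using mult_mat_vec_carrier[OF Hbar_carrier assms] .
  have q: "\<And>i l. i \<in> {1..N} \<Longrightarrow> l \<in> cnbr N E i \<Longrightarrow>
     (w - Hmat N E *\<^sub>v (Hbar N E *\<^sub>v w)) $ pp N E i l = w $ pp N E i l - avg N E w l"
  proof -
    fix i l assume i: "i \<in> {1..N}" and l: "l \<in> cnbr N E i"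
    have r: "pp N E i l < ?m" using pp_lt i l by auto
    have l1: "l \<in> {1..N}" using cnbr_sub[OF i] l by blast
    show "(w - Hmat N E *\<^sub>v (Hbar N E *\<^sub>v w)) $ pp N E i l = w $ pp N E i l - avg N E w l"
      using r H_apply[OF i l z] Hbar_apply[OF assms, of "l - 1"] l1 H_carrier by auto
  qed
  have "(\<Sum>r<?m. ((w - Hmat N E *\<^sub>v (Hbar N E *\<^sub>v w)) $ r)^2) =
      (\<Sum>i=1..N. \<Sum>l\<in>cnbr N E i. (w $ pp N E i l - avg N E w l)^2)"
    by (subst sum_reindex) (rule sum.cong, simp, rule sum.cong, simp_all add: q)
  also have "\<dots> = (\<Sum>l=1..N. \<Sum>i\<in>cnbr N E l. (w $ pp N E i l - avg N E w l)^2)"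
    by (rule swap_sum)
  also have "\<dots> = (\<Sum>l=1..N. (\<Sum>i\<in>cnbr N E l. (w $ pp N E i l)^2) - real (mdeg N E l) * (avg N E w l)^2)"
    by (rule sum.cong, simp, unfold avg_def, rule group_var) (auto simp: card_cnbr mdeg_pos)
  also have "\<dots> = (\<Sum>l=1..N. \<Sum>i\<in>cnbr N E l. (w $ pp N E i l)^2) - (\<Sum>l=1..N. real (mdeg N E l) * (avg N E w l)^2)"
    by (simp add: sum_subtractf)
  also have "(\<Sum>l=1..N. \<Sum>i\<in>cnbr N E l. (w $ pp N E i l)^2) = (\<Sum>r<?m. (w $ r)^2)"
    by (subst sum_reindex) (rule swap_sum[symmetric])
  finally show ?thesis .
qed

lemma Q_apply: assumes "v \<in> carrier_vec (mtot N E)"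
  shows "Qmat N E i j *\<^sub>v v = Wmat N E i j *\<^sub>v v - Hmat N E *\<^sub>v (Hbar N E *\<^sub>v (Wmat N E i j *\<^sub>v v))"
proof -
  have c: "Hmat N E * Hbar N E * Wmat N E i j \<in> carrier_mat (mtot N E) (mtot N E)"
    using H_carrier Hbar_carrier W_carrier by (meson mult_carrier_mat)
  have hh: "Hmat N E * Hbar N E \<in> carrier_mat (mtot N E) (mtot N E)"
    using H_carrier Hbar_carrier by (meson mult_carrier_mat)
  have w: "Wmat N E i j *\<^sub>v v \<in> carrier_vec (mtot N E)" using mult_mat_vec_carrier[OF W_carrier assms] .
  have e1: "(Hmat N E * Hbar N E * Wmat N E i j) *\<^sub>v v = (Hmat N E * Hbar N E) *\<^sub>v (Wmat N E i j *\<^sub>v v)"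
    by (rule assoc_mult_mat_vec[OF hh W_carrier assms])
  have e2: "(Hmat N E * Hbar N E) *\<^sub>v (Wmat N E i j *\<^sub>v v) = Hmat N E *\<^sub>v (Hbar N E *\<^sub>v (Wmat N E i j *\<^sub>v v))"
    by (rule assoc_mult_mat_vec[OF H_carrier Hbar_carrier w])
  show ?thesis unfolding Qmat_def
    by (subst minus_mult_distrib_mat_vec[OF W_carrier c assms]) (simp only: e1 e2)
qed

lemma Q_norm: assumes "i \<in> {1..N}" "j \<in> {1..N}" "i \<noteq> j" "v \<in> carrier_vec (mtot N E)"
  shows "(\<Sum>r<mtot N E. ((Qmat N E i j *\<^sub>v v) $ r)^2) = (\<Sum>r<mtot N E. (v $ r)^2)
     - 1/2 * (\<Sum>l\<in>ind N E i j. (aco N E i j l v)^2)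
     - (\<Sum>l=1..N. real (mdeg N E l) * (avg N E (Wmat N E i j *\<^sub>v v) l)^2)"
proof -
  have w: "Wmat N E i j *\<^sub>v v \<in> carrier_vec (mtot N E)" using mult_mat_vec_carrier[OF W_carrier assms(4)] .
  show ?thesis unfolding Q_apply[OF assms(4)] P_norm[OF w] W_norm[OF assms] by simp
qed


lemma Q_carrier: "Qmat N E i j \<in> carrier_mat (mtot N E) (mtot N E)"
proof -
  have "Hmat N E * Hbar N E * Wmat N E i j \<in> carrier_mat (mtot N E) (mtot N E)"
    using H_carrier Hbar_carrier W_carrier by (meson mult_carrier_mat)
  then show ?thesis unfolding Qmat_def using W_carrier by (meson minus_carrier_mat)
qed

lemma QTQ_apply: assumes "v \<in> carrier_vec (mtot N E)"
  shows "(transpose_mat (Qmat N E i j) * Qmat N E i j) *\<^sub>v v = transpose_mat (Qmat N E i j) *\<^sub>v (Qmat N E i j *\<^sub>v v)"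
proof -
  have "transpose_mat (Qmat N E i j) \<in> carrier_mat (mtot N E) (mtot N E)" using Q_carrier by simp
  then show ?thesis by (rule assoc_mult_mat_vec[OF _ Q_carrier assms])
qed

lemma QTQ_quad: assumes "v \<in> carrier_vec (mtot N E)"
  shows "(\<Sum>r<mtot N E. v $ r * ((transpose_mat (Qmat N E i j) * Qmat N E i j) *\<^sub>v v) $ r)
     = (\<Sum>r<mtot N E. ((Qmat N E i j *\<^sub>v v) $ r)^2)"
proof -
  let ?Q = "Qmat N E i j" let ?m = "mtot N E"
  have qv: "?Q *\<^sub>v v \<in> carrier_vec ?m" using mult_mat_vec_carrier[OF Q_carrier assms] .
  have tq: "transpose_mat ?Q *\<^sub>v (?Q *\<^sub>v v) \<in> carrier_vec ?m"
    using mult_mat_vec_carrier[OF _ qv, of "transpose_mat ?Q"] Q_carrier by simp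
  have "(\<Sum>r<?m. v $ r * ((transpose_mat ?Q * ?Q) *\<^sub>v v) $ r) = v \<bullet> (transpose_mat ?Q *\<^sub>v (?Q *\<^sub>v v))"
    using sp_def'[OF assms tq] QTQ_apply[OF assms] by simp
  also have "\<dots> = (transpose_mat ?Q *\<^sub>v (?Q *\<^sub>v v)) \<bullet> v"
    by (rule comm_scalar_prod[OF assms tq])
  also have "\<dots> = (?Q *\<^sub>v v) \<bullet> (?Q *\<^sub>v v)"
    by (rule transpose_vec_mult_scalar[OF Q_carrier assms qv])
  also have "\<dots> = (\<Sum>r<?m. ((?Q *\<^sub>v v) $ r)^2)"
    using sp_def'[OF qv qv] by (simp add: power2_eq_square)
  finally show ?thesis .
qed

lemma E_apply: assumes "v \<in> carrier_vec (mtot N E)" "r < mtot N E"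
  shows "(EQTQ N E C *\<^sub>v v) $ r = (\<Sum>i=1..N. \<Sum>j\<in>nbr N C i.
     (1 / (real N * real (card (nbr N C i)))) * ((transpose_mat (Qmat N E i j) * Qmat N E i j) *\<^sub>v v) $ r)"
proof -
  let ?m = "mtot N E"
  let ?M = "\<lambda>i j. transpose_mat (Qmat N E i j) * Qmat N E i j"
  let ?p = "\<lambda>i. 1 / (real N * real (card (nbr N C i)))"
  have Mc: "\<And>i j. ?M i j \<in> carrier_mat ?m ?m" using Q_carrier by (meson mult_carrier_mat transpose_carrier_mat)
  have Ec: "EQTQ N E C \<in> carrier_mat ?m ?m" unfolding EQTQ_def by simp
  have "(EQTQ N E C *\<^sub>v v) $ r = (\<Sum>c<?m. (\<Sum>i=1..N. \<Sum>j\<in>nbr N C i. ?p i * ?M i j $$ (r, c)) * v $ c)"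
    by (subst mv_index[OF Ec assms]) (rule sum.cong, auto simp: EQTQ_def assms(2))
  also have "\<dots> = (\<Sum>c<?m. \<Sum>i=1..N. \<Sum>j\<in>nbr N C i. ?p i * (?M i j $$ (r, c) * v $ c))"
    by (simp add: sum_distrib_right mult.assoc)
  also have "\<dots> = (\<Sum>i=1..N. \<Sum>c<?m. \<Sum>j\<in>nbr N C i. ?p i * (?M i j $$ (r, c) * v $ c))"
    by (rule sum.swap)
  also have "\<dots> = (\<Sum>i=1..N. \<Sum>j\<in>nbr N C i. \<Sum>c<?m. ?p i * (?M i j $$ (r, c) * v $ c))"
    by (rule sum.cong, simp, rule sum.swap)
  also have "\<dots> = (\<Sum>i=1..N. \<Sum>j\<in>nbr N C i. ?p i * (?M i j *\<^sub>v v) $ r)"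
    by (rule sum.cong, simp, rule sum.cong, simp) (simp add: mv_index[OF Mc assms] sum_distrib_left)
  finally show ?thesis .
qed


lemma E_carrier: "EQTQ N E C \<in> carrier_mat (mtot N E) (mtot N E)" unfolding EQTQ_def by simp

lemma zero_ev: assumes N1: "1 \<le> N" and CE: "\<forall>i j. C i j \<longrightarrow> E i j"
  shows "eigenvalue (EQTQ N E C) 0"
proof -
  let ?m = "mtot N E"
  define y :: "real vec" where "y = unit_vec N 0"
  define x where "x = Hmat N E *\<^sub>v y"
  have yc: "y \<in> carrier_vec N" unfolding y_def by simp
  have xc: "x \<in> carrier_vec ?m" unfolding x_def using mult_mat_vec_carrier[OF H_carrier yc] .
  have Hy: "\<And>i l. i \<in> {1..N} \<Longrightarrow> l \<in> cnbr N E i \<Longrightarrow> x $ pp N E i l = y $ (l - 1)"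
    unfolding x_def using H_apply yc by blast
  have Hbx: "Hbar N E *\<^sub>v x = y"
  proof (rule eq_vecI)
    show "dim_vec (Hbar N E *\<^sub>v x) = dim_vec y" using Hbar_carrier yc by simp
    fix c assume "c < dim_vec y"
    hence c: "c < N" using yc by simp
    have c1: "c + 1 \<in> {1..N}" using c by auto
    have "(\<Sum>i'\<in>cnbr N E (c+1). x $ pp N E i' (c+1)) = (\<Sum>i'\<in>cnbr N E (c+1). y $ c)"
    proof (rule sum.cong)
      fix i' assume i': "i' \<in> cnbr N E (c+1)"
      have i'r: "i' \<in> {1..N}" using cnbr_sub[OF c1] i' by blast
      have "c + 1 \<in> cnbr N E i'" using cnbr_sym[OF c1 i'] .
      then show "x $ pp N E i' (c+1) = y $ c" using Hy[OF i'r] by simp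
    qed simp
    also have "\<dots> = real (mdeg N E (c+1)) * y $ c" by (simp add: card_cnbr)
    finally show "(Hbar N E *\<^sub>v x) $ c = y $ c"
      using Hbar_apply[OF xc c] mdeg_pos[of "c+1"] unfolding avg_def by simp
  qed
  have Qx: "(Qmat N E i j *\<^sub>v x) $ r = 0" if i: "i \<in> {1..N}" and j: "j \<in> nbr N C i" and r: "r < ?m" for i j r
  proof -
    have jr: "j \<in> {1..N}" using j unfolding nbr_def by auto
    have Wx: "Wmat N E i j *\<^sub>v x = x"
    proof (rule eq_vecI)
      show "dim_vec (Wmat N E i j *\<^sub>v x) = dim_vec x" using xc by (simp add: Wmat_def)
      fix r assume "r < dim_vec x"
      hence r: "r < ?m" using xc by simp
      have "\<And>l. l \<in> ind N E i j \<Longrightarrow> aco N E i j l x = 0"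
      proof -
        fix l assume l: "l \<in> ind N E i j"
        have "l \<in> cnbr N E i" "l \<in> cnbr N E j" using l unfolding ind_def by auto
        then show "aco N E i j l x = 0" using aco_eq[OF i jr l] Hy i jr by simp
      qed
      then show "(Wmat N E i j *\<^sub>v x) $ r = x $ r" using W_apply[OF xc r] by simp
    qed
    show ?thesis unfolding Q_apply[OF xc] Wx Hbx using r xc unfolding x_def
      using H_carrier by simp
  qed
  have Ex: "EQTQ N E C *\<^sub>v x = 0 \<cdot>\<^sub>v x"
  proof (rule eq_vecI)
    show "dim_vec (EQTQ N E C *\<^sub>v x) = dim_vec (0 \<cdot>\<^sub>v x)" using xc by (simp add: EQTQ_def)
    fix r assume "r < dim_vec (0 \<cdot>\<^sub>v x)"
    hence r: "r < ?m" using xc by simp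
    have "\<And>i j. i \<in> {1..N} \<Longrightarrow> j \<in> nbr N C i \<Longrightarrow> ((transpose_mat (Qmat N E i j) * Qmat N E i j) *\<^sub>v x) $ r = 0"
    proof -
      fix i j assume i: "i \<in> {1..N}" and j: "j \<in> nbr N C i"
      have qc: "Qmat N E i j *\<^sub>v x \<in> carrier_vec ?m" using mult_mat_vec_carrier[OF Q_carrier xc] .
      have tc: "transpose_mat (Qmat N E i j) \<in> carrier_mat ?m ?m" using Q_carrier by simp
      show "((transpose_mat (Qmat N E i j) * Qmat N E i j) *\<^sub>v x) $ r = 0"
        unfolding QTQ_apply[OF xc] mv_index[OF tc qc r] using Qx[OF i j] by simp
    qed
    then show "(EQTQ N E C *\<^sub>v x) $ r = (0 \<cdot>\<^sub>v x) $ r"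
      unfolding E_apply[OF xc r] using r xc by simp
  qed
  have one: "1 \<in> {1..N}" "1 \<in> cnbr N E 1" using N1 unfolding cnbr_def by auto
  have "x $ pp N E 1 1 = 1" using Hy[OF one] N1 unfolding y_def by simp
  hence "x \<noteq> 0\<^sub>v ?m" using pp_lt[OF one] by auto
  moreover have "dim_row (EQTQ N E C) = ?m" by (simp add: EQTQ_def)
  ultimately show ?thesis unfolding eigenvalue_def eigenvector_def using Ex xc by auto
qed


end

lemma triple_swap: fixes f :: "nat \<Rightarrow> real"
  shows "(\<Sum>r\<in>R. f r * (\<Sum>i\<in>I. \<Sum>j\<in>J i. g i j r)) = (\<Sum>i\<in>I. \<Sum>j\<in>J i. \<Sum>r\<in>R. f r * g i j r)"
proof -
  have "(\<Sum>r\<in>R. f r * (\<Sum>i\<in>I. \<Sum>j\<in>J i. g i j r)) = (\<Sum>r\<in>R. \<Sum>i\<in>I. \<Sum>j\<in>J i. f r * g i j r)"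
    by (simp add: sum_distrib_left)
  also have "\<dots> = (\<Sum>i\<in>I. \<Sum>r\<in>R. \<Sum>j\<in>J i. f r * g i j r)" by (rule sum.swap)
  also have "\<dots> = (\<Sum>i\<in>I. \<Sum>j\<in>J i. \<Sum>r\<in>R. f r * g i j r)" by (rule sum.cong, simp, rule sum.swap)
  finally show ?thesis .
qed

lemma nested_zero: fixes h :: "nat \<Rightarrow> nat \<Rightarrow> real"
  assumes "finite I" "\<And>i. i \<in> I \<Longrightarrow> finite (J i)" "\<And>i j. i \<in> I \<Longrightarrow> j \<in> J i \<Longrightarrow> h i j \<ge> 0"
    "(\<Sum>i\<in>I. \<Sum>j\<in>J i. h i j) \<le> 0"
  shows "\<And>i j. i \<in> I \<Longrightarrow> j \<in> J i \<Longrightarrow> h i j = 0"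
proof -
  fix i j assume i: "i \<in> I" and j: "j \<in> J i"
  have inner: "\<And>i. i \<in> I \<Longrightarrow> (\<Sum>j\<in>J i. h i j) \<ge> 0" using assms(3) by (simp add: sum_nonneg)
  have "(\<Sum>i\<in>I. \<Sum>j\<in>J i. h i j) \<ge> 0" using inner by (simp add: sum_nonneg)
  hence "(\<Sum>i\<in>I. \<Sum>j\<in>J i. h i j) = 0" using assms(4) by linarith
  hence "\<forall>i\<in>I. (\<Sum>j\<in>J i. h i j) = 0" using sum_nonneg_eq_0_iff[of I "\<lambda>i. \<Sum>j\<in>J i. h i j"] assms(1) inner by simp
  hence "(\<Sum>j\<in>J i. h i j) = 0" using i by simp
  hence "\<forall>j\<in>J i. h i j = 0" using sum_nonneg_eq_0_iff[of "J i" "h i"] assms(2)[OF i] assms(3)[OF i] by simp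
  then show "h i j = 0" using j by simp
qed

context ugraph begin

lemma ev_lt1:
  assumes N2: "N \<ge> 2" and conn: "connected_graph N E"
    and mt: "maximal_triangle_free_spanning_subgraph N M E"
    and ugC: "undirected_graph N C" and MC: "\<forall>i j. M i j \<longrightarrow> C i j" and CE: "\<forall>i j. C i j \<longrightarrow> E i j"
    and ev: "eigenvalue (EQTQ N E C) k"
  shows "k < 1"
proof (rule ccontr)
  assume "\<not> k < 1" hence k1: "k \<ge> 1" by simp
  let ?m = "mtot N E"
  have dr: "dim_row (EQTQ N E C) = ?m" by (simp add: EQTQ_def)
  obtain v where vc: "v \<in> carrier_vec ?m" and vnz: "v \<noteq> 0\<^sub>v ?m" and Ev: "EQTQ N E C *\<^sub>v v = k \<cdot>\<^sub>v v"
    using ev unfolding eigenvalue_def eigenvector_def dr by blast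
  define n2 where "n2 = (\<Sum>r<?m. (v $ r)^2)"
  define p where "p i = 1 / (real N * real (card (nbr N C i)))" for i
  define Q where "Q i j = Qmat N E i j" for i j
  define sq where "sq i j = (\<Sum>r<?m. ((Q i j *\<^sub>v v) $ r)^2)" for i j
  define A where "A i j = (\<Sum>l\<in>ind N E i j. (aco N E i j l v)^2)" for i j
  define B where "B i j = (\<Sum>l=1..N. real (mdeg N E l) * (avg N E (Wmat N E i j *\<^sub>v v) l)^2)" for i j
  define D where "D i j = 1/2 * A i j + B i j" for i j
  have Cr: "\<And>i j. C i j \<Longrightarrow> i \<in> {1..N} \<and> j \<in> {1..N} \<and> i \<noteq> j"
  proof -
    fix i j assume c: "C i j"
    have "\<forall>i j. C i j \<longrightarrow> i \<in> {1..N} \<and> j \<in> {1..N}" "\<forall>i. \<not> C i i"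
      using ugC unfolding undirected_graph_def by auto
    then show "i \<in> {1..N} \<and> j \<in> {1..N} \<and> i \<noteq> j" using c by blast
  qed
  have finC: "\<And>i. finite (nbr N C i)" unfolding nbr_def by simp
  have pairs: "\<And>i j. i \<in> {1..N} \<Longrightarrow> j \<in> nbr N C i \<Longrightarrow> j \<in> {1..N} \<and> i \<noteq> j \<and> C i j"
    unfolding nbr_def using Cr by auto
  have ppos: "\<And>i j. i \<in> {1..N} \<Longrightarrow> j \<in> nbr N C i \<Longrightarrow> p i > 0"
  proof -
    fix i j assume "i \<in> {1..N}" "j \<in> nbr N C i"
    hence "card (nbr N C i) > 0" using finC card_gt_0_iff by blast
    then show "p i > 0" unfolding p_def using N2 by simp
  qed
  have Dnn: "\<And>i j. D i j \<ge> 0" unfolding D_def A_def B_def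
    by (intro add_nonneg_nonneg mult_nonneg_nonneg sum_nonneg) auto
  have sqD: "\<And>i j. i \<in> {1..N} \<Longrightarrow> j \<in> nbr N C i \<Longrightarrow> sq i j = n2 - D i j"
  proof -
    fix i j assume i: "i \<in> {1..N}" and j: "j \<in> nbr N C i"
    show "sq i j = n2 - D i j" unfolding sq_def Q_def n2_def D_def A_def B_def
      using Q_norm[OF i _ _ vc, of j] pairs[OF i j] by simp
  qed
  have "(\<Sum>r<?m. v $ r * (EQTQ N E C *\<^sub>v v) $ r) = k * n2"
    unfolding Ev n2_def using vc by (simp add: sum_distrib_left power2_eq_square mult_ac)
  moreover have "(\<Sum>r<?m. v $ r * (EQTQ N E C *\<^sub>v v) $ r) = (\<Sum>i=1..N. \<Sum>j\<in>nbr N C i. p i * sq i j)"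
  proof -
    have "(\<Sum>r<?m. v $ r * (EQTQ N E C *\<^sub>v v) $ r) = (\<Sum>r<?m. v $ r * (\<Sum>i=1..N. \<Sum>j\<in>nbr N C i.
         p i * ((transpose_mat (Q i j) * Q i j) *\<^sub>v v) $ r))"
      by (rule sum.cong) (simp_all add: E_apply[OF vc] p_def Q_def)
    also have "\<dots> = (\<Sum>i=1..N. \<Sum>j\<in>nbr N C i. \<Sum>r<?m. v $ r * (p i * ((transpose_mat (Q i j) * Q i j) *\<^sub>v v) $ r))"
      by (rule triple_swap)
    also have "\<dots> = (\<Sum>i=1..N. \<Sum>j\<in>nbr N C i. p i * sq i j)"
      unfolding sq_def Q_def
      by (rule sum.cong, simp, rule sum.cong, simp) (simp add: QTQ_quad[OF vc, symmetric] sum_distrib_left mult_ac)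
    finally show ?thesis .
  qed
  ultimately have kn: "k * n2 = (\<Sum>i=1..N. \<Sum>j\<in>nbr N C i. p i * sq i j)" by simp
  have psum: "(\<Sum>i=1..N. \<Sum>j\<in>nbr N C i. p i) \<le> 1"
  proof -
    have "(\<Sum>i=1..N. \<Sum>j\<in>nbr N C i. p i) \<le> (\<Sum>i=1..N. 1 / real N)"
    proof (rule sum_mono)
      fix i assume "i \<in> {1..N}"
      show "(\<Sum>j\<in>nbr N C i. p i) \<le> 1 / real N"
      proof (cases "card (nbr N C i) = 0")
        case True then show ?thesis by simp
      next
        case False then show ?thesis unfolding p_def by simp
      qed
    qed
    also have "\<dots> = 1" using N2 by simp
    finally show ?thesis .
  qed
  have vnz': "\<exists>r<?m. v $ r \<noteq> 0"
  proof (rule ccontr)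
    assume "\<not> (\<exists>r<?m. v $ r \<noteq> 0)"
    hence "v = 0\<^sub>v ?m" using vc by (intro eq_vecI) auto
    with vnz show False by simp
  qed
  have n2pos: "n2 > 0"
  proof -
    obtain r where r: "r < ?m" "v $ r \<noteq> 0" using vnz' by blast
    have "(v $ r)^2 \<le> n2" unfolding n2_def by (rule member_le_sum) (use r in auto)
    moreover have "(v $ r)^2 > 0" using r by simp
    ultimately show ?thesis by linarith
  qed
  have "(\<Sum>i=1..N. \<Sum>j\<in>nbr N C i. p i * D i j) = (\<Sum>i=1..N. \<Sum>j\<in>nbr N C i. p i * n2 - p i * sq i j)"
    by (rule sum.cong, simp, rule sum.cong, simp) (simp add: sqD algebra_simps)
  also have "\<dots> = (\<Sum>i=1..N. \<Sum>j\<in>nbr N C i. p i) * n2 - k * n2"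
    unfolding kn by (simp add: sum_subtractf sum_distrib_right mult.assoc)
  also have "\<dots> \<le> 0"
  proof -
    have "(\<Sum>i=1..N. \<Sum>j\<in>nbr N C i. p i) * n2 \<le> 1 * n2"
      using psum n2pos by (intro mult_right_mono) auto
    moreover have "1 * n2 \<le> k * n2" using k1 n2pos by (intro mult_right_mono) auto
    ultimately show ?thesis by linarith
  qed
  finally have Dsum: "(\<Sum>i=1..N. \<Sum>j\<in>nbr N C i. p i * D i j) \<le> 0" .
  have D0: "\<And>i j. i \<in> {1..N} \<Longrightarrow> j \<in> nbr N C i \<Longrightarrow> D i j = 0"
  proof -
    fix i j assume i: "i \<in> {1..N}" and j: "j \<in> nbr N C i"
    have nn: "\<And>i j. i \<in> {1..N} \<Longrightarrow> j \<in> nbr N C i \<Longrightarrow> p i * D i j \<ge> 0"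
      using ppos Dnn by (meson less_imp_le mult_nonneg_nonneg)
    have "p i * D i j = 0"
      by (rule nested_zero[of "{1..N}" "nbr N C", OF _ _ nn Dsum i j]) (simp_all add: finC)
    then show "D i j = 0" using ppos[OF i j] by simp
  qed
  have AB0: "A i j = 0 \<and> B i j = 0" if i: "i \<in> {1..N}" and j: "j \<in> nbr N C i" for i j
  proof -
    have "A i j \<ge> 0" "B i j \<ge> 0" unfolding A_def B_def by (auto intro!: sum_nonneg)
    then show ?thesis using D0[OF i j] unfolding D_def by linarith
  qed
  have aco0: "aco N E i j l v = 0" if i: "i \<in> {1..N}" and j: "j \<in> nbr N C i" and l: "l \<in> ind N E i j" for i j l
  proof -
    have fI: "finite (ind N E i j)" unfolding ind_def by simp
    have "(aco N E i j l v)^2 = 0"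
      using AB0[OF i j] sum_nonneg_eq_0_iff[OF fI, of "\<lambda>l. (aco N E i j l v)^2"] l unfolding A_def by auto
    then show ?thesis by simp
  qed
  have eqfact: "v $ pp N E a l = v $ pp N E b l" if Cab: "C a b" and la: "l \<in> cnbr N E a" and lb: "l \<in> cnbr N E b" for a b l
  proof -
    have a: "a \<in> {1..N}" and b: "b \<in> nbr N C a" "b \<in> {1..N}" using Cr[OF Cab] Cab unfolding nbr_def by auto
    have l: "l \<in> ind N E a b" using la lb unfolding ind_def by auto
    show ?thesis using aco0[OF a b(1) l] aco_eq[OF a b(2) l] by simp
  qed
  have spanM: "undirected_graph N M" and ME: "\<forall>i j. M i j \<longrightarrow> E i j"
    and maxM: "\<forall>a b. E a b \<and> \<not> M a b \<longrightarrow> (\<exists>c. M a c \<and> M c b)"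
    using mt unfolding maximal_triangle_free_spanning_subgraph_def spanning_subgraph_def by auto
  have Mex: "\<exists>x. M a x" if "E a b" for a b
    using maxM that by blast
  obtain j0 where j0: "E 1 j0"
  proof -
    have "E\<^sup>*\<^sup>* 1 2" using conn N2 unfolding connected_graph_def by auto
    then show ?thesis
    proof (cases rule: converse_rtranclpE)
      case base then show ?thesis by simp
    next
      case (step y) then show ?thesis using that by blast
    qed
  qed
  obtain x0 where "M 1 x0" using Mex[OF j0] by blast
  hence Cx0: "C 1 x0" using MC by blast
  have pair0: "1 \<in> {1..N}" "x0 \<in> nbr N C 1" using Cr[OF Cx0] Cx0 unfolding nbr_def by auto
  have Wv: "Wmat N E 1 x0 *\<^sub>v v = v"
  proof (rule eq_vecI)
    show "dim_vec (Wmat N E 1 x0 *\<^sub>v v) = dim_vec v" using vc by (simp add: Wmat_def)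
    fix r assume "r < dim_vec v" hence r: "r < ?m" using vc by simp
    show "(Wmat N E 1 x0 *\<^sub>v v) $ r = v $ r"
      using W_apply[OF vc r] aco0[OF pair0] by simp
  qed
  have sumfact: "(\<Sum>i\<in>cnbr N E l. v $ pp N E i l) = 0" if l: "l \<in> {1..N}" for l
  proof -
    have fin: "finite {1..N}" by simp
    have "B 1 x0 = 0" using AB0[OF pair0] by simp
    hence "real (mdeg N E l) * (avg N E v l)^2 = 0"
      using sum_nonneg_eq_0_iff[OF fin, of "\<lambda>l. real (mdeg N E l) * (avg N E v l)^2"] l
      unfolding B_def Wv by auto
    hence "avg N E v l = 0" using mdeg_pos[of l] by simp
    then show ?thesis unfolding avg_def using mdeg_pos[of l] by simp
  qed
  have grp: "v $ pp N E i l = 0" if l: "l \<in> {1..N}" and i: "i \<in> cnbr N E l" for i l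
  proof -
    have same: "v $ pp N E i' l = v $ pp N E l l" if i': "i' \<in> cnbr N E l" for i'
    proof (cases "i' = l")
      case True then show ?thesis by simp
    next
      case False
      hence Eli: "E l i'" using in_cnbr[OF l] i' by simp
      have i'r: "i' \<in> {1..N}" using E_range[OF Eli] by simp
      have ll: "l \<in> cnbr N E l" unfolding cnbr_def by simp
      have li: "l \<in> cnbr N E i'" using in_cnbr[OF i'r] E_sym[OF Eli] by simp
      show ?thesis
      proof (cases "M l i'")
        case True
        then have "C l i'" using MC by blast
        then show ?thesis using eqfact[OF _ ll li] by simp
      next
        case False
        then obtain c where c: "M l c" "M c i'" using maxM Eli by blast
        have Elc: "E l c" using c ME by blast
        have cr: "c \<in> {1..N}" using E_range[OF Elc] by simp
        have lc: "l \<in> cnbr N E c" using in_cnbr[OF cr] E_sym[OF Elc] by simp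
        have Cs: "C l c" "C c i'" using c MC by blast+
        have "v $ pp N E l l = v $ pp N E c l" using eqfact[OF Cs(1) ll lc] .
        also have "\<dots> = v $ pp N E i' l" using eqfact[OF Cs(2) lc li] .
        finally show ?thesis by simp
      qed
    qed
    have "(\<Sum>i\<in>cnbr N E l. v $ pp N E i l) = (\<Sum>i\<in>cnbr N E l. v $ pp N E l l)"
    proof (rule sum.cong)
      fix i assume "i \<in> cnbr N E l"
      then show "v $ pp N E i l = v $ pp N E l l" by (rule same)
    qed simp
    also have "\<dots> = real (mdeg N E l) * v $ pp N E l l" by (simp add: card_cnbr)
    finally have "v $ pp N E l l = 0" using sumfact[OF l] mdeg_pos[of l] by simp
    then show ?thesis using same[OF i] by simp
  qed
  have "v = 0\<^sub>v ?m"
  proof (rule eq_vecI)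
    show "dim_vec v = dim_vec (0\<^sub>v ?m)" using vc by simp
    fix r assume "r < dim_vec (0\<^sub>v ?m)" hence r: "r < ?m" by simp
    then have "r \<in> (\<lambda>(i,l). pp N E i l) ` TT N E" using img_TT by simp
    then obtain x where x: "x \<in> TT N E" "r = (\<lambda>(i,l). pp N E i l) x" by blast
    obtain i l where "x = (i, l)" by (cases x)
    with x have il: "(i, l) \<in> TT N E" "r = pp N E i l" by auto
    have i: "i \<in> {1..N}" and li: "l \<in> cnbr N E i" using il unfolding TT_def by auto
    have lr: "l \<in> {1..N}" using cnbr_sub[OF i] li by blast
    show "v $ r = 0\<^sub>v ?m $ r" using grp[OF lr cnbr_sym[OF i li]] il r by simp
  qed
  with vnz show False by simp
qed

end

theorem lemma6:
  fixes N :: nat and EI EC EM :: "nat \<Rightarrow> nat \<Rightarrow> bool"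
  assumes "N \<ge> 2"
    and "undirected_graph N EI"
    and "connected_graph N EI"
    and "\<not> complete_graph N EI"
    and "maximal_triangle_free_spanning_subgraph N EM EI"
    and "undirected_graph N EC"
    and "\<forall>i j. EM i j \<longrightarrow> EC i j"
    and "\<forall>i j. EC i j \<longrightarrow> EI i j"
  shows "lambda_max (EQTQ N EI EC) < 1"
proof -
  interpret G: ugraph N EI by (unfold_locales) (rule assms(2))
  let ?E = "EQTQ N EI EC"
  let ?S = "{k. eigenvalue ?E k}"
  have Ec: "?E \<in> carrier_mat (mtot N EI) (mtot N EI)" unfolding EQTQ_def by simp
  have "char_poly ?E \<noteq> 0" using degree_monic_char_poly[OF Ec] by auto
  hence fin0: "finite {k. poly (char_poly ?E) k = 0}" by (rule poly_roots_finite)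
  have "?S = {k. poly (char_poly ?E) k = 0}" using eigenvalue_root_char_poly[OF Ec] by auto
  with fin0 have fin: "finite ?S" by simp
  have "0 \<in> ?S" using G.zero_ev[of EC] assms(1,8) by simp
  hence ne: "?S \<noteq> {}" by blast
  have lt: "\<And>k. k \<in> ?S \<Longrightarrow> k < 1"
    using G.ev_lt1[OF assms(1,3,5,6,7,8)] by blast
  show ?thesis unfolding lambda_max_def using Max_in[OF fin ne] lt by blast
qed

end
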